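(* Let $\mathbf{A}\in\mathbb{R}^{m\times n}$, $\mathbf{c}\in\mathbb{R}^m$ and $0<\epsilon\le1$. Let $\mathbf{x}$ be any solution to the LSA instance $(\mathbf{A},\mathbf{c},\epsilon)$, and output YES if $\|\mathbf{A}\mathbf{x}-\mathbf{c}\|_2\le\epsilon\|\mathbf{c}\|_2$ and NO otherwise. Then this output is a correct answer to the LSD problem for $(\mathbf{A},\mathbf{c},\epsilon)$.
   Context: $\boldsymbol{\Pi}_{\mathbf{A}}$ is the orthogonal projection onto the image of $\mathbf{A}$. A solution to the LSA instance $(\mathbf{A},\mathbf{c},\epsilon)$ is any $\mathbf{x}\in\mathbb{R}^n$ with $\|\mathbf{A}\mathbf{x}-\boldsymbol{\Pi}_{\mathbf{A}}\mathbf{c}\|_2\le\epsilon\|\boldsymbol{\Pi}_{\mathbf{A}}\mathbf{c}\|_2$. The LSD (linear system decision) problem for $(\mathbf{A},\mathbf{c},\epsilon)$ requires outputting YES if there exists $\mathbf{x}$ with $\mathbf{A}\mathbf{x}=\mathbf{c}$, outputting NO if $\|\mathbf{A}\mathbf{x}-\mathbf{c}\|_2>\epsilon\|\mathbf{c}\|_2$ for all $\mathbf{x}$, and allows any output otherwise. *)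

theory Defs
  imports "HOL-Analysis.Analysis"
begin

definition orth_proj_img :: "real^'n^'m \<Rightarrow> real^'m \<Rightarrow> real^'m" where
  "orth_proj_img A c =
     (THE p. p \<in> range (\<lambda>x. A *v x) \<and> (\<forall>y \<in> range (\<lambda>x. A *v x). (c - p) \<bullet> y = 0))"

definition LSA_solution :: "real^'n^'m \<Rightarrow> real^'m \<Rightarrow> real \<Rightarrow> real^'n \<Rightarrow> bool" where
  "LSA_solution A c eps x \<longleftrightarrow>
     norm (A *v x - orth_proj_img A c) \<le> eps * norm (orth_proj_img A c)"

text \<open>The answer (True = YES, False = NO) is a correct output for the LSD problem (A, c, eps):
  YES is required if A x = c is solvable, NO is required if every x has
  norm (A x - c) > eps * norm c; otherwise either answer is allowed.\<close>
definition LSD_correct :: "real^'n^'m \<Rightarrow> real^'m \<Rightarrow> real \<Rightarrow> bool \<Rightarrow> bool" where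
  "LSD_correct A c eps out \<longleftrightarrow>
     ((\<exists>x. A *v x = c) \<longrightarrow> out = True) \<and>
     ((\<forall>x. norm (A *v x - c) > eps * norm c) \<longrightarrow> out = False)"

end

theory Submission
  imports Defs
begin

lemma proj_in_range:
  assumes "A *v x0 = (c::real^'m)"
  shows "orth_proj_img (A::real^'n^'m) c = c"
  unfolding orth_proj_img_def
proof (rule the_equality)
  show "c \<in> range (\<lambda>x. A *v x) \<and> (\<forall>y\<in>range (\<lambda>x. A *v x). (c - c) \<bullet> y = 0)"
    using assms by auto
next
  fix p assume p: "p \<in> range (\<lambda>x. A *v x) \<and> (\<forall>y\<in>range (\<lambda>x. A *v x). (c - p) \<bullet> y = 0)"
  then obtain z where z: "p = A *v z" by auto
  have "c - p = A *v (x0 - z)" using assms z by (simp add: matrix_vector_mult_diff_distrib)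
  hence "(c - p) \<bullet> (c - p) = 0" using p by (metis rangeI)
  thus "p = c" by simp
qed

theorem lemma10p2:
  fixes A :: "real^'n^'m" and c :: "real^'m" and eps :: real and x :: "real^'n"
  assumes "0 < eps" and "eps \<le> 1"
    and "LSA_solution A c eps x"
  shows "LSD_correct A c eps (norm (A *v x - c) \<le> eps * norm c)"
  unfolding LSD_correct_def
proof (intro conjI impI)
  assume "\<exists>x. A *v x = c"
  then obtain x0 where "A *v x0 = c" by auto
  hence "orth_proj_img A c = c" by (rule proj_in_range)
  thus "(norm (A *v x - c) \<le> eps * norm c) = True"
    using assms(3) unfolding LSA_solution_def by simp
next
  assume "\<forall>x. norm (A *v x - c) > eps * norm c"
  hence "eps * norm c < norm (A *v x - c)" by blast
  thus "(norm (A *v x - c) \<le> eps * norm c) = False" by simp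
qed

end
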